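(* Let $(S_b,I_b,R_b,D_b,S_r,I_r,R_r,D_r)$ be a solution of the modified Lanchester/SIR system defined for all $t\ge0$ with nonnegative components and nonnegative initial conditions, and suppose all model parameters are constant for $t\ge T_0$ for some $T_0$ (i.e. all switching events have occurred). Then for each compartment $C\in\{S_b,I_b,R_b,D_b,S_r,I_r,R_r,D_r\}$, $C'(t)\to 0$ as $t\to\infty$.
   Context: Barrier function: $f(x)=\exp(-0.0001/x)$ for $x>0$, $f(0)=0$; $f(x)x^a:=0$ at $x=0$. System (with $N_b=S_b+I_b+R_b$, $N_r=S_r+I_r+R_r$, $1/N$-terms set to $0$ when $N=0$), $A_r := \delta_r(f(S_r)S_r^p+f(R_r)R_r^p+\eta_r f(I_r)I_r^p)$: $S_b' = -\beta_b S_bI_b/N_b - \gamma_b S_b - A_r f(S_b)S_b^q - \alpha_r(S_r+R_r)S_b$, $I_b' = \beta_b S_bI_b/N_b - \tilde\gamma_b I_b(S_b+R_b)/N_b - A_r f(I_b)I_b^q + \alpha_r(S_r+R_r)S_b$, $R_b' = \gamma_b S_b + \tilde\gamma_b I_b(S_b+R_b)/N_b - A_r f(R_b)R_b^q$, $D_b' = A_r(f(S_b)S_b^q+f(I_b)I_b^q+f(R_b)R_b^q)$, red equations by interchanging $b$ and $r$. Parameters $\alpha,\beta,\tilde\gamma,\delta\ge0$, $\gamma,\eta\in[0,1]$, $p,q\ge0$; the parameters $\alpha,\gamma,\tilde\gamma,\delta$ may be piecewise constant in time (switched on/off at finitely many event times). *)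

theory Defs
  imports "HOL-Analysis.Analysis"
begin

definition barrier :: "real \<Rightarrow> real" where
  "barrier x = (if x > 0 then exp (- 0.0001 / x) else 0)"

definition fpow :: "real \<Rightarrow> real \<Rightarrow> real" where
  "fpow a x = (if x > 0 then barrier x * x powr a else 0)"

definition sdiv :: "real \<Rightarrow> real \<Rightarrow> real" where
  "sdiv x N = (if N = 0 then 0 else x / N)"

definition attack :: "real \<Rightarrow> real \<Rightarrow> real \<Rightarrow> real \<Rightarrow> real \<Rightarrow> real \<Rightarrow> real" where
  "attack \<delta> \<eta> p S I R = \<delta> * (fpow p S + fpow p R + \<eta> * fpow p I)"

text \<open>Right-hand sides for one army (own compartments S I R, enemy's S' R',
  enemy's alpha and enemy's attack strength Aen).\<close>
definition rhsS :: "real \<Rightarrow> real \<Rightarrow> real \<Rightarrow> real \<Rightarrow> real \<Rightarrow> real \<Rightarrow> real \<Rightarrow> real \<Rightarrow> real \<Rightarrow> real \<Rightarrow> real" where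
  "rhsS \<beta> \<gamma> \<alpha>en Aen q S I R Sen Ren =
     - \<beta> * sdiv (S * I) (S + I + R) - \<gamma> * S - Aen * fpow q S - \<alpha>en * (Sen + Ren) * S"

definition rhsI :: "real \<Rightarrow> real \<Rightarrow> real \<Rightarrow> real \<Rightarrow> real \<Rightarrow> real \<Rightarrow> real \<Rightarrow> real \<Rightarrow> real \<Rightarrow> real \<Rightarrow> real" where
  "rhsI \<beta> \<gamma>t \<alpha>en Aen q S I R Sen Ren =
     \<beta> * sdiv (S * I) (S + I + R) - \<gamma>t * sdiv (I * (S + R)) (S + I + R)
     - Aen * fpow q I + \<alpha>en * (Sen + Ren) * S"

definition rhsR :: "real \<Rightarrow> real \<Rightarrow> real \<Rightarrow> real \<Rightarrow> real \<Rightarrow> real \<Rightarrow> real \<Rightarrow> real" where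
  "rhsR \<gamma> \<gamma>t Aen q S I R =
     \<gamma> * S + \<gamma>t * sdiv (I * (S + R)) (S + I + R) - Aen * fpow q R"

definition rhsD :: "real \<Rightarrow> real \<Rightarrow> real \<Rightarrow> real \<Rightarrow> real \<Rightarrow> real" where
  "rhsD Aen q S I R = Aen * (fpow q S + fpow q I + fpow q R)"

definition piecewise_const :: "real set \<Rightarrow> (real \<Rightarrow> real) \<Rightarrow> bool" where
  "piecewise_const E g \<longleftrightarrow> finite E \<and>
     (\<forall>t. t \<ge> 0 \<and> t \<notin> E \<longrightarrow> (\<exists>e>0. \<forall>s. s \<ge> 0 \<and> \<bar>s - t\<bar> < e \<longrightarrow> g s = g t))"

end

theory Submission
  imports Defs "HOL-Real_Asymp.Real_Asymp"
begin

lemma decr_conv: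
  fixes f :: "real \<Rightarrow> real"
  assumes dec: "\<And>s t. a \<le> s \<Longrightarrow> s \<le> t \<Longrightarrow> f t \<le> f s"
    and lb: "\<And>t. a \<le> t \<Longrightarrow> B \<le> f t"
  shows "\<exists>L. (f \<longlongrightarrow> L) at_top"
proof -
  define L where "L = Inf (f ` {a..})"
  have bdd: "bdd_below (f ` {a..})" by (rule bdd_belowI2[of _ B]) (use lb in auto)
  have "(f \<longlongrightarrow> L) at_top"
  proof (rule decreasing_tendsto)
    show "\<forall>\<^sub>F n in at_top. L \<le> f n"
      unfolding eventually_at_top_linorder L_def
      by (rule exI[of _ a]) (auto intro!: cInf_lower bdd)
  next
    fix x assume "L < x"
    then obtain y where y: "y \<in> f ` {a..}" "y < x" unfolding L_def
      using cInf_lessD[of "f ` {a..}" x] by blast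
    then obtain t where t: "t \<ge> a" "f t < x" by auto
    show "\<forall>\<^sub>F n in at_top. f n < x"
      unfolding eventually_at_top_linorder
      by (rule exI[of _ t]) (use t dec in force)
  qed
  then show ?thesis by blast
qed

lemma deriv_decr:
  fixes f :: "real \<Rightarrow> real"
  assumes "\<And>t. a \<le> t \<Longrightarrow> (f has_real_derivative f' t) (at t)"
    and "\<And>t. a \<le> t \<Longrightarrow> f' t \<le> 0"
    and "a \<le> s" "s \<le> t"
  shows "f t \<le> f s"
proof (rule DERIV_nonpos_imp_nonincreasing[of s t f])
  fix x assume "s \<le> x" "x \<le> t"
  then have ax: "a \<le> x" using assms by linarith
  show "\<exists>y. DERIV f x :> y \<and> y \<le> 0" using assms(1)[OF ax] assms(2)[OF ax] by blast
qed (use assms in auto)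

lemma conv_cont_ucb:
  fixes f :: "real \<Rightarrow> real"
  assumes c: "continuous_on {a..} f" and lim: "(f \<longlongrightarrow> L) at_top"
  shows "uniformly_continuous_on {a..} f \<and> (\<exists>M. \<forall>t\<ge>a. \<bar>f t\<bar> \<le> M)"
proof -
  have ev: "\<exists>B. \<forall>t\<ge>B. \<bar>f t - L\<bar> < e" if "e > 0" for e
    using lim that unfolding tendsto_iff eventually_at_top_linorder dist_real_def by blast
  obtain B0 where B0: "\<forall>t\<ge>B0. \<bar>f t - L\<bar> < 1" using ev[of 1] by auto
  define B where "B = max B0 a"
  have cB: "continuous_on {a..B} f" using c by (rule continuous_on_subset) auto
  have "compact (f ` {a..B})" using cB by (intro compact_continuous_image) auto
  then obtain M0 where M0: "\<forall>y\<in>f ` {a..B}. norm y \<le> M0"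
    using compact_imp_bounded bounded_iff by blast
  have bnd: "\<forall>t\<ge>a. \<bar>f t\<bar> \<le> max M0 (\<bar>L\<bar> + 1)"
  proof (intro allI impI)
    fix t assume "a \<le> t"
    show "\<bar>f t\<bar> \<le> max M0 (\<bar>L\<bar> + 1)"
    proof (cases "t \<le> B")
      case True
      then have "f t \<in> f ` {a..B}" using \<open>a \<le> t\<close> by auto
      then have "norm (f t) \<le> M0" using M0 by blast
      then show ?thesis by simp
    next
      case False
      then have "t \<ge> B0" unfolding B_def by simp
      then have "\<bar>f t - L\<bar> < 1" using B0 by blast
      then have "\<bar>f t\<bar> \<le> \<bar>L\<bar> + 1" by linarith
      then show ?thesis by simp
    qed
  qed
  have uc: "uniformly_continuous_on {a..} f"
    unfolding uniformly_continuous_on_def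
  proof (intro allI impI)
    fix e :: real assume e: "e > 0"
    obtain B1 where B1: "\<forall>t\<ge>B1. \<bar>f t - L\<bar> < e/2" using ev[of "e/2"] e by auto
    define C where "C = max B1 a"
    have cC: "continuous_on {a..C+1} f" using c by (rule continuous_on_subset) auto
    have "uniformly_continuous_on {a..C+1} f"
      using cC by (intro compact_uniformly_continuous) auto
    then obtain d0 where d0: "d0 > 0" "\<forall>x\<in>{a..C+1}. \<forall>x'\<in>{a..C+1}. dist x' x < d0 \<longrightarrow> dist (f x') (f x) < e"
      unfolding uniformly_continuous_on_def using e by metis
    show "\<exists>d>0. \<forall>x\<in>{a..}. \<forall>x'\<in>{a..}. dist x' x < d \<longrightarrow> dist (f x') (f x) < e"
    proof (intro exI[of _ "min d0 1"] conjI ballI impI)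
      show "min d0 1 > 0" using d0 by simp
      fix x x' assume x: "x \<in> {a..}" and x': "x' \<in> {a..}" and d: "dist x' x < min d0 1"
      show "dist (f x') (f x) < e"
      proof (cases "x \<le> C + 1 \<and> x' \<le> C + 1")
        case True then show ?thesis using d0 x x' d by auto
      next
        case False
        then have "x \<ge> B1" "x' \<ge> B1" using d unfolding C_def dist_real_def by auto
        then have "\<bar>f x - L\<bar> < e/2" "\<bar>f x' - L\<bar> < e/2" using B1 by auto
        then show ?thesis unfolding dist_real_def by linarith
      qed
    qed
  qed
  show ?thesis using uc bnd by blast
qed

lemma barbalat:
  fixes f f' :: "real \<Rightarrow> real"
  assumes der: "\<And>t. a \<le> t \<Longrightarrow> (f has_real_derivative f' t) (at t)"
    and lim: "(f \<longlongrightarrow> L) at_top" and uc: "uniformly_continuous_on {a..} f'"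
  shows "(f' \<longlongrightarrow> 0) at_top"
  unfolding tendsto_iff eventually_at_top_linorder dist_real_def
proof (intro allI impI)
  fix e :: real assume e: "e > 0"
  obtain d where d: "d > 0" "\<forall>x\<in>{a..}. \<forall>x'\<in>{a..}. dist x' x < d \<longrightarrow> dist (f' x') (f' x) < e/2"
    using uc e unfolding uniformly_continuous_on_def by (metis half_gt_zero)
  define h where "h = d/2"
  have h: "h > 0" "h < d" using d unfolding h_def by auto
  obtain B where B: "\<forall>t\<ge>B. \<bar>f t - L\<bar> < e*h/4"
    using lim e h unfolding tendsto_iff eventually_at_top_linorder dist_real_def
    by (metis divide_pos_pos mult_pos_pos zero_less_numeral)
  show "\<exists>N. \<forall>t\<ge>N. \<bar>f' t - 0\<bar> < e"
  proof (intro exI[of _ "max a B"] allI impI)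
    fix t assume t: "max a B \<le> t"
    show "\<bar>f' t - 0\<bar> < e"
    proof (rule ccontr)
      assume ne: "\<not> \<bar>f' t - 0\<bar> < e"
      obtain z where z: "t < z" "z < t + h" "f (t+h) - f t = (t + h - t) * f' z"
        using MVT2[of t "t+h" f f'] der t h by force
      have "dist z t < d" using z h unfolding dist_real_def by auto
      then have "\<bar>f' z - f' t\<bar> < e/2" using d t z unfolding dist_real_def by auto
      then have fz: "\<bar>f' z\<bar> > e/2" using ne by linarith
      have "h * (e/2) < h * \<bar>f' z\<bar>" using fz h by (intro mult_strict_left_mono) auto
      also have "\<dots> = \<bar>f (t+h) - f t\<bar>" using z h by (simp add: abs_mult)
      also have "\<dots> \<le> \<bar>f (t+h) - L\<bar> + \<bar>f t - L\<bar>" by linarith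
      also have "\<dots> < e*h/4 + e*h/4" using B t h by (intro add_strict_mono) auto
      finally show False by simp
    qed
  qed
qed

definition ucb :: "real set \<Rightarrow> (real \<Rightarrow> real) \<Rightarrow> bool" where
  "ucb S f \<longleftrightarrow> uniformly_continuous_on S f \<and> (\<exists>M. \<forall>t\<in>S. \<bar>f t\<bar> \<le> M)"

lemma ucb_const: "ucb S (\<lambda>t. c)"
  unfolding ucb_def by (auto intro: uniformly_continuous_on_const)

lemma ucb_add: "ucb S f \<Longrightarrow> ucb S g \<Longrightarrow> ucb S (\<lambda>t. f t + g t)"
  unfolding ucb_def
proof (elim conjE exE, intro conjI)
  fix M N assume "uniformly_continuous_on S f" "uniformly_continuous_on S g"
    "\<forall>t\<in>S. \<bar>f t\<bar> \<le> M" "\<forall>t\<in>S. \<bar>g t\<bar> \<le> N"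
  then show "uniformly_continuous_on S (\<lambda>t. f t + g t)" "\<exists>M. \<forall>t\<in>S. \<bar>f t + g t\<bar> \<le> M"
    by (auto intro!: uniformly_continuous_on_add exI[of _ "M+N"] abs_triangle_ineq[THEN order_trans] add_mono)
qed

lemma ucb_minus: "ucb S f \<Longrightarrow> ucb S (\<lambda>t. - f t)"
  unfolding ucb_def by (auto intro: uniformly_continuous_on_minus)

lemma ucb_diff: "ucb S f \<Longrightarrow> ucb S g \<Longrightarrow> ucb S (\<lambda>t. f t - g t)"
  using ucb_add[of S f "\<lambda>t. - g t"] ucb_minus[of S g] by simp

lemma ucb_mult:
  assumes "ucb S f" "ucb S g" shows "ucb S (\<lambda>t. f t * g t)"
proof -
  obtain M N where M: "\<forall>t\<in>S. \<bar>f t\<bar> \<le> M" and N: "\<forall>t\<in>S. \<bar>g t\<bar> \<le> N"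
    and uf: "uniformly_continuous_on S f" and ug: "uniformly_continuous_on S g"
    using assms unfolding ucb_def by blast
  define K where "K = \<bar>M\<bar> + \<bar>N\<bar> + 1"
  have K: "K > 0" unfolding K_def by simp
  have M': "\<forall>t\<in>S. \<bar>f t\<bar> \<le> K" "\<forall>t\<in>S. \<bar>g t\<bar> \<le> K" using M N unfolding K_def by force+
  have "uniformly_continuous_on S (\<lambda>t. f t * g t)"
    unfolding uniformly_continuous_on_def
  proof (intro allI impI)
    fix e :: real assume e: "e > 0"
    define e' where "e' = e / (2*K)"
    have e': "e' > 0" using e K unfolding e'_def by simp
    obtain d1 where d1: "d1 > 0" "\<forall>x\<in>S. \<forall>x'\<in>S. dist x' x < d1 \<longrightarrow> dist (f x') (f x) < e'"
      using uf e' unfolding uniformly_continuous_on_def by metis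
    obtain d2 where d2: "d2 > 0" "\<forall>x\<in>S. \<forall>x'\<in>S. dist x' x < d2 \<longrightarrow> dist (g x') (g x) < e'"
      using ug e' unfolding uniformly_continuous_on_def by metis
    show "\<exists>d>0. \<forall>x\<in>S. \<forall>x'\<in>S. dist x' x < d \<longrightarrow> dist (f x' * g x') (f x * g x) < e"
    proof (intro exI[of _ "min d1 d2"] conjI ballI impI)
      show "min d1 d2 > 0" using d1 d2 by simp
      fix x x' assume x: "x \<in> S" "x' \<in> S" "dist x' x < min d1 d2"
      have a: "\<bar>f x' - f x\<bar> < e'" "\<bar>g x' - g x\<bar> < e'"
        using d1 d2 x unfolding dist_real_def by auto
      have "f x' * g x' - f x * g x = f x' * (g x' - g x) + g x * (f x' - f x)"
        by (simp add: algebra_simps)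
      then have "\<bar>f x' * g x' - f x * g x\<bar> \<le> \<bar>f x'\<bar> * \<bar>g x' - g x\<bar> + \<bar>g x\<bar> * \<bar>f x' - f x\<bar>"
        by (simp add: abs_mult[symmetric] abs_triangle_ineq)
      also have "\<dots> \<le> K * e' + K * e'"
        using a M' x by (intro add_mono mult_mono) auto
      also have "\<dots> = e" unfolding e'_def using K by simp
      finally have "\<bar>f x' * g x' - f x * g x\<bar> \<le> e" .
      have "\<bar>f x'\<bar> * \<bar>g x' - g x\<bar> + \<bar>g x\<bar> * \<bar>f x' - f x\<bar> < K * e' + K * e'"
      proof -
        have "\<bar>f x'\<bar> * \<bar>g x' - g x\<bar> \<le> K * \<bar>g x' - g x\<bar>" using M' x by (intro mult_right_mono) auto
        also have "\<dots> < K * e'" using a K by simp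
        finally have 1: "\<bar>f x'\<bar> * \<bar>g x' - g x\<bar> < K * e'" .
        have "\<bar>g x\<bar> * \<bar>f x' - f x\<bar> \<le> K * e'" using a M' x by (intro mult_mono) auto
        with 1 show ?thesis by linarith
      qed
      then show "dist (f x' * g x') (f x * g x) < e"
        unfolding dist_real_def e'_def using K
        \<open>\<bar>f x' * g x' - f x * g x\<bar> \<le> \<bar>f x'\<bar> * \<bar>g x' - g x\<bar> + \<bar>g x\<bar> * \<bar>f x' - f x\<bar>\<close> by simp
    qed
  qed
  moreover have "\<forall>t\<in>S. \<bar>f t * g t\<bar> \<le> K * K"
    using M' K by (auto simp: abs_mult intro!: mult_mono)
  ultimately show ?thesis unfolding ucb_def by blast
qed

lemma dist3: "dist (x1::real, x2::real, x3::real) (y1, y2, y3) \<le> dist x1 y1 + dist x2 y2 + dist x3 y3"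
proof -
  have "dist (x1, x2, x3) (y1, y2, y3) = sqrt ((dist x1 y1)\<^sup>2 + (sqrt ((dist x2 y2)\<^sup>2 + (dist x3 y3)\<^sup>2))\<^sup>2)"
    by (simp add: dist_Pair_Pair)
  also have "\<dots> \<le> sqrt ((dist x1 y1)\<^sup>2) + sqrt ((sqrt ((dist x2 y2)\<^sup>2 + (dist x3 y3)\<^sup>2))\<^sup>2)"
    by (intro sqrt_add_le_add_sqrt) auto
  also have "\<dots> = dist x1 y1 + sqrt ((dist x2 y2)\<^sup>2 + (dist x3 y3)\<^sup>2)" by simp
  also have "\<dots> \<le> dist x1 y1 + (sqrt ((dist x2 y2)\<^sup>2) + sqrt ((dist x3 y3)\<^sup>2))"
    by (intro add_left_mono sqrt_add_le_add_sqrt) auto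
  finally show ?thesis by simp
qed

lemma ucb_comp3:
  fixes F :: "real \<times> real \<times> real \<Rightarrow> real"
  assumes "ucb S g1" "ucb S g2" "ucb S g3" "compact K" "continuous_on K F"
    "\<And>t. t \<in> S \<Longrightarrow> (g1 t, g2 t, g3 t) \<in> K"
  shows "ucb S (\<lambda>t. F (g1 t, g2 t, g3 t))"
proof -
  have uF: "uniformly_continuous_on K F" using assms by (intro compact_uniformly_continuous)
  obtain M where M: "\<forall>y\<in>F ` K. norm y \<le> M"
    using compact_continuous_image[OF assms(5,4)] compact_imp_bounded bounded_iff by blast
  have "uniformly_continuous_on S (\<lambda>t. F (g1 t, g2 t, g3 t))"
    unfolding uniformly_continuous_on_def
  proof (intro allI impI)
    fix e :: real assume e: "e > 0"
    obtain d where d: "d > 0" "\<forall>x\<in>K. \<forall>x'\<in>K. dist x' x < d \<longrightarrow> dist (F x') (F x) < e"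
      using uF e unfolding uniformly_continuous_on_def by metis
    have d3: "d/3 > 0" using d by simp
    obtain d1 where d1: "d1 > 0" "\<forall>x\<in>S. \<forall>x'\<in>S. dist x' x < d1 \<longrightarrow> dist (g1 x') (g1 x) < d/3"
      using assms(1) d3 unfolding ucb_def uniformly_continuous_on_def by metis
    obtain d2 where d2: "d2 > 0" "\<forall>x\<in>S. \<forall>x'\<in>S. dist x' x < d2 \<longrightarrow> dist (g2 x') (g2 x) < d/3"
      using assms(2) d3 unfolding ucb_def uniformly_continuous_on_def by metis
    obtain d4 where d4: "d4 > 0" "\<forall>x\<in>S. \<forall>x'\<in>S. dist x' x < d4 \<longrightarrow> dist (g3 x') (g3 x) < d/3"
      using assms(3) d3 unfolding ucb_def uniformly_continuous_on_def by metis
    show "\<exists>d>0. \<forall>x\<in>S. \<forall>x'\<in>S. dist x' x < d \<longrightarrow> dist (F (g1 x', g2 x', g3 x')) (F (g1 x, g2 x, g3 x)) < e"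
    proof (intro exI[of _ "min d1 (min d2 d4)"] conjI ballI impI)
      show "min d1 (min d2 d4) > 0" using d1 d2 d4 by simp
      fix x x' assume x: "x \<in> S" "x' \<in> S" "dist x' x < min d1 (min d2 d4)"
      have "dist (g1 x', g2 x', g3 x') (g1 x, g2 x, g3 x) \<le> dist (g1 x') (g1 x) + dist (g2 x') (g2 x) + dist (g3 x') (g3 x)"
        by (rule dist3)
      also have "\<dots> < d/3 + d/3 + d/3" using x d1 d2 d4 by (intro add_strict_mono) auto
      finally have "dist (g1 x', g2 x', g3 x') (g1 x, g2 x, g3 x) < d" by simp
      then show "dist (F (g1 x', g2 x', g3 x')) (F (g1 x, g2 x, g3 x)) < e"
        using d assms(6) x by blast
    qed
  qed
  moreover have "\<forall>t\<in>S. \<bar>F (g1 t, g2 t, g3 t)\<bar> \<le> M" using M assms(6) by fastforce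
  ultimately show ?thesis unfolding ucb_def by blast
qed

lemma ucb_comp1:
  fixes F :: "real \<Rightarrow> real"
  assumes "ucb S g" "compact K" "continuous_on K F" "\<And>t. t \<in> S \<Longrightarrow> g t \<in> K"
  shows "ucb S (\<lambda>t. F (g t))"
proof -
  have "ucb S (\<lambda>t. (\<lambda>p. F (fst p)) (g t, g t, g t))"
    using assms by (intro ucb_comp3[where K="K \<times> K \<times> K"])
      (auto intro!: compact_Times continuous_intros continuous_on_compose2[OF assms(3)])
  then show ?thesis by simp
qed

lemma barrier_lim: "((\<lambda>x::real. exp (- 0.0001 / x)) \<longlongrightarrow> 0) (at_right 0)"
  by real_asymp

lemma fpow_cont:
  assumes q: "q \<ge> 0"
  shows "continuous_on {0..} (fpow q)"
proof -
  have pos: "continuous_on {0<..} (fpow q)"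
  proof (rule continuous_on_cong[THEN iffD1, OF refl _ _])
    show "continuous_on {0<..} (\<lambda>x. exp (- 0.0001 / x) * x powr q)"
      by (intro continuous_intros) auto
    show "\<And>x. x \<in> {0<..} \<Longrightarrow> exp (- 0.0001 / x) * x powr q = fpow q x"
      by (simp add: fpow_def barrier_def)
  qed
  show ?thesis unfolding continuous_on_eq_continuous_within
  proof
    fix x :: real assume x: "x \<in> {0..}"
    show "continuous (at x within {0..}) (fpow q)"
    proof (cases "x > 0")
      case True
      then have "isCont (fpow q) x"
        using pos by (simp add: continuous_on_eq_continuous_at)
      then show ?thesis using continuous_at_imp_continuous_within by blast
    next
      case False
      then have x0: "x = 0" using x by simp
      have "(fpow q \<longlongrightarrow> 0) (at_right 0)"
      proof (rule Lim_null_comparison[OF _ barrier_lim])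
        show "\<forall>\<^sub>F y in at_right 0. norm (fpow q y) \<le> exp (- 0.0001 / y)"
          unfolding eventually_at_right_field
        proof (intro exI[of _ 1] conjI)
          show "(0::real) < 1" by simp
          show "\<forall>y>0. y < 1 \<longrightarrow> norm (fpow q y) \<le> exp (- 0.0001 / y)"
          proof (intro allI impI)
            fix y :: real assume y: "0 < y" "y < 1"
            have "y powr q \<le> 1" using y q by (intro powr_le1) auto
            then have "exp (- 0.0001 / y) * y powr q \<le> exp (- 0.0001 / y) * 1"
              by (intro mult_left_mono) auto
            then show "norm (fpow q y) \<le> exp (- 0.0001 / y)"
              using y by (simp add: fpow_def barrier_def)
          qed
        qed
      qed
      then show ?thesis unfolding continuous_within x0 at_within_Ici_at_right
        by (simp add: fpow_def)
    qed
  qed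
qed

lemma fpow_nonneg: "fpow q x \<ge> 0"
  by (simp add: fpow_def barrier_def)

lemma sdiv_nonneg: "x \<ge> 0 \<Longrightarrow> N \<ge> 0 \<Longrightarrow> sdiv x N \<ge> 0"
  by (simp add: sdiv_def)

definition F3 :: "real \<times> real \<times> real \<Rightarrow> real" where
  "F3 p = sdiv (fst p * fst (snd p)) (fst p + fst (snd p) + snd (snd p))"

lemma F3_bound: "x \<ge> 0 \<Longrightarrow> y \<ge> 0 \<Longrightarrow> z \<ge> 0 \<Longrightarrow> \<bar>F3 (x, y, z)\<bar> \<le> \<bar>x\<bar>"
proof -
  assume a: "x \<ge> 0" "y \<ge> 0" "z \<ge> 0"
  show ?thesis
  proof (cases "x + y + z = 0")
    case True then show ?thesis by (simp add: F3_def sdiv_def)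
  next
    case False
    then have N: "x + y + z > 0" using a by simp
    have "x * y \<le> x * (x + y + z)" using a by (intro mult_left_mono) auto
    then have "x * y / (x + y + z) \<le> x" using N by (simp add: divide_le_eq)
    moreover have "x * y / (x + y + z) \<ge> 0" using a N by simp
    ultimately show ?thesis using False a by (simp add: F3_def sdiv_def)
  qed
qed

lemma F3_cont: "continuous_on {p. fst p \<ge> 0 \<and> fst (snd p) \<ge> 0 \<and> snd (snd p) \<ge> 0} F3"
  unfolding continuous_on_eq_continuous_within
proof
  let ?O = "{p::real\<times>real\<times>real. fst p \<ge> 0 \<and> fst (snd p) \<ge> 0 \<and> snd (snd p) \<ge> 0}"
  fix p :: "real \<times> real \<times> real" assume p: "p \<in> ?O"
  obtain x y z where pxyz: "p = (x, y, z)" by (cases p) auto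
  show "continuous (at p within ?O) F3"
  proof (cases "x + y + z = 0")
    case False
    have "isCont (\<lambda>p. (fst p * fst (snd p)) / (fst p + fst (snd p) + snd (snd p))) p"
      using False pxyz by (intro continuous_intros) auto
    moreover have ev: "\<forall>\<^sub>F q in nhds p. (fst q * fst (snd q)) / (fst q + fst (snd q) + snd (snd q)) = F3 q"
      by (simp add: F3_def sdiv_def)
    ultimately have "isCont F3 p"
      using isCont_cong[OF ev] by simp
    then show ?thesis using continuous_at_imp_continuous_within by blast
  next
    case True
    then have p0: "p = (0, 0, 0)" using p pxyz by auto
    have F30: "F3 (0,0,0) = 0" by (simp add: F3_def sdiv_def)
    have "(F3 \<longlongrightarrow> 0) (at p within ?O)"
    proof (rule Lim_null_comparison)
      show "\<forall>\<^sub>F q in at p within ?O. norm (F3 q) \<le> \<bar>fst q\<bar>"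
        unfolding eventually_at_filter
      proof (rule always_eventually, intro allI impI)
        fix q :: "real \<times> real \<times> real" assume "q \<in> ?O"
        then show "norm (F3 q) \<le> \<bar>fst q\<bar>" using F3_bound[of "fst q" "fst (snd q)" "snd (snd q)"]
          by (cases q) auto
      qed
      have "((\<lambda>q. fst q) \<longlongrightarrow> fst p) (at p within ?O)"
        by (intro tendsto_intros)
      then have "((\<lambda>q. \<bar>fst q\<bar>) \<longlongrightarrow> \<bar>fst p\<bar>) (at p within ?O)"
        by (intro tendsto_intros)
      then show "((\<lambda>q. \<bar>fst q\<bar>) \<longlongrightarrow> 0) (at p within ?O)" using p0 by simp
    qed
    then show ?thesis unfolding continuous_within using p0 F30 by simp
  qed
qed

lemma ucb_bound: "ucb S f \<Longrightarrow> \<exists>M. \<forall>t\<in>S. \<bar>f t\<bar> \<le> M"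
  unfolding ucb_def by blast

lemma ucb_fpow:
  assumes "ucb S g" "\<And>t. t \<in> S \<Longrightarrow> g t \<ge> 0" "q \<ge> 0"
  shows "ucb S (\<lambda>t. fpow q (g t))"
proof -
  obtain M where M: "\<forall>t\<in>S. \<bar>g t\<bar> \<le> M" using ucb_bound[OF assms(1)] by blast
  show ?thesis
  proof (rule ucb_comp1[OF assms(1), where K="{0..M}"])
    show "continuous_on {0..M} (fpow q)"
      using fpow_cont[OF assms(3)] by (rule continuous_on_subset) auto
    show "\<And>t. t \<in> S \<Longrightarrow> g t \<in> {0..M}" using M assms(2) by fastforce
  qed simp
qed

lemma ucb_sdiv:
  assumes "ucb S x" "ucb S y" "ucb S z"
    "\<And>t. t \<in> S \<Longrightarrow> x t \<ge> 0" "\<And>t. t \<in> S \<Longrightarrow> y t \<ge> 0" "\<And>t. t \<in> S \<Longrightarrow> z t \<ge> 0"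
  shows "ucb S (\<lambda>t. sdiv (x t * y t) (x t + y t + z t))"
proof -
  obtain M1 where M1: "\<forall>t\<in>S. \<bar>x t\<bar> \<le> M1" using ucb_bound[OF assms(1)] by blast
  obtain M2 where M2: "\<forall>t\<in>S. \<bar>y t\<bar> \<le> M2" using ucb_bound[OF assms(2)] by blast
  obtain M3 where M3: "\<forall>t\<in>S. \<bar>z t\<bar> \<le> M3" using ucb_bound[OF assms(3)] by blast
  have "ucb S (\<lambda>t. F3 (x t, y t, z t))"
  proof (rule ucb_comp3[OF assms(1-3), where K="{0..M1} \<times> {0..M2} \<times> {0..M3}"])
    show "compact ({0..M1} \<times> {0..M2} \<times> {0..M3})" by (intro compact_Times) auto
    show "continuous_on ({0..M1} \<times> {0..M2} \<times> {0..M3}) F3"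
      using F3_cont by (rule continuous_on_subset) auto
    show "\<And>t. t \<in> S \<Longrightarrow> (x t, y t, z t) \<in> {0..M1} \<times> {0..M2} \<times> {0..M3}"
      using M1 M2 M3 assms(4-6) by fastforce
  qed
  then show ?thesis by (simp add: F3_def)
qed

lemma tendsto_eventually_eq:
  fixes f g :: "real \<Rightarrow> real"
  assumes "(f \<longlongrightarrow> L) at_top" "\<And>t. a \<le> t \<Longrightarrow> g t = f t"
  shows "(g \<longlongrightarrow> L) at_top"
proof -
  have "\<forall>\<^sub>F t in at_top. f t = g t"
    unfolding eventually_at_top_linorder using assms(2) by (intro exI[of _ a]) auto
  then show ?thesis using assms(1) tendsto_cong by blast
qed

lemma army_conv:
  fixes S I R D A Se Re :: "real \<Rightarrow> real" and \<beta> \<gamma> \<gamma>t \<alpha> q a :: real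
  assumes par: "\<beta> \<ge> 0" "\<gamma> \<ge> 0" "\<gamma>t \<ge> 0" "\<alpha> \<ge> 0"
    and pos: "\<And>t. a \<le> t \<Longrightarrow> A t \<ge> 0 \<and> Se t \<ge> 0 \<and> Re t \<ge> 0 \<and> S t \<ge> 0 \<and> I t \<ge> 0 \<and> R t \<ge> 0 \<and> D t \<ge> 0"
    and dS: "\<And>t. a \<le> t \<Longrightarrow> (S has_real_derivative rhsS \<beta> \<gamma> \<alpha> (A t) q (S t) (I t) (R t) (Se t) (Re t)) (at t)"
    and dI: "\<And>t. a \<le> t \<Longrightarrow> (I has_real_derivative rhsI \<beta> \<gamma>t \<alpha> (A t) q (S t) (I t) (R t) (Se t) (Re t)) (at t)"
    and dR: "\<And>t. a \<le> t \<Longrightarrow> (R has_real_derivative rhsR \<gamma> \<gamma>t (A t) q (S t) (I t) (R t)) (at t)"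
    and dD: "\<And>t. a \<le> t \<Longrightarrow> (D has_real_derivative rhsD (A t) q (S t) (I t) (R t)) (at t)"
  shows "(\<exists>L. (S \<longlongrightarrow> L) at_top) \<and> (\<exists>L. (I \<longlongrightarrow> L) at_top) \<and> (\<exists>L. (R \<longlongrightarrow> L) at_top) \<and> (\<exists>L. (D \<longlongrightarrow> L) at_top)"
proof -
  have nn: "0 \<le> sdiv (S t * I t) (S t + I t + R t) \<and> 0 \<le> sdiv (I t * (S t + R t)) (S t + I t + R t)
       \<and> 0 \<le> fpow q (S t) \<and> 0 \<le> fpow q (I t) \<and> 0 \<le> fpow q (R t)" if t: "a \<le> t" for t
  proof -
    have p: "0 \<le> S t" "0 \<le> I t" "0 \<le> R t" using pos[OF t] by auto
    have "0 \<le> S t * I t" "0 \<le> I t * (S t + R t)" "0 \<le> S t + I t + R t" using p by simp_all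
    then show ?thesis by (simp add: sdiv_nonneg fpow_nonneg)
  qed
  have Sdec: "S t \<le> S s" if "a \<le> s" "s \<le> t" for s t
  proof (rule deriv_decr[OF dS _ that])
    fix t assume t: "a \<le> t"
    show "rhsS \<beta> \<gamma> \<alpha> (A t) q (S t) (I t) (R t) (Se t) (Re t) \<le> 0"
    proof -
      have "0 \<le> \<beta> * sdiv (S t * I t) (S t + I t + R t)" "0 \<le> \<gamma> * S t" "0 \<le> A t * fpow q (S t)"
        "0 \<le> \<alpha> * (Se t + Re t) * S t"
        using pos[OF t] nn[OF t] par by simp_all
      then show ?thesis unfolding rhsS_def by linarith
    qed
  qed
  have SIdec: "S t + I t \<le> S s + I s" if "a \<le> s" "s \<le> t" for s t
  proof (rule deriv_decr[where f="\<lambda>t. S t + I t", OF DERIV_add[OF dS dI] _ that])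
    fix t assume t: "a \<le> t"
    show "rhsS \<beta> \<gamma> \<alpha> (A t) q (S t) (I t) (R t) (Se t) (Re t) + rhsI \<beta> \<gamma>t \<alpha> (A t) q (S t) (I t) (R t) (Se t) (Re t) \<le> 0"
    proof -
      have "0 \<le> \<gamma>t * sdiv (I t * (S t + R t)) (S t + I t + R t)" "0 \<le> \<gamma> * S t" "0 \<le> A t * fpow q (S t)"
        "0 \<le> A t * fpow q (I t)"
        using pos[OF t] nn[OF t] par by simp_all
      then show ?thesis unfolding rhsS_def rhsI_def by linarith
    qed
  qed
  have Ddec: "- D t \<le> - D s" if "a \<le> s" "s \<le> t" for s t
  proof (rule deriv_decr[where f="\<lambda>t. - D t", OF DERIV_minus[OF dD] _ that])
    fix t assume t: "a \<le> t"
    show "- rhsD (A t) q (S t) (I t) (R t) \<le> 0"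
      using pos[OF t] nn[OF t] unfolding rhsD_def
      by simp
  qed
  define G where "G t = S t + I t + R t + D t" for t
  have dG: "(G has_real_derivative 0) (at t)" if "a \<le> t" for t
  proof -
    have "(G has_real_derivative rhsS \<beta> \<gamma> \<alpha> (A t) q (S t) (I t) (R t) (Se t) (Re t) + rhsI \<beta> \<gamma>t \<alpha> (A t) q (S t) (I t) (R t) (Se t) (Re t)
       + rhsR \<gamma> \<gamma>t (A t) q (S t) (I t) (R t) + rhsD (A t) q (S t) (I t) (R t)) (at t)"
      unfolding G_def[abs_def] using that by (intro DERIV_add dS dI dR dD)
    moreover have "rhsS \<beta> \<gamma> \<alpha> (A t) q (S t) (I t) (R t) (Se t) (Re t) + rhsI \<beta> \<gamma>t \<alpha> (A t) q (S t) (I t) (R t) (Se t) (Re t)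
       + rhsR \<gamma> \<gamma>t (A t) q (S t) (I t) (R t) + rhsD (A t) q (S t) (I t) (R t) = 0"
      unfolding rhsS_def rhsI_def rhsR_def rhsD_def by (simp add: algebra_simps)
    ultimately show ?thesis by simp
  qed
  have Gc: "G t = G a" if "a \<le> t" for t
  proof -
    have "G t \<le> G a" by (rule deriv_decr[OF dG, of a]) (use that in auto)
    moreover have "- G t \<le> - G a" by (rule deriv_decr[where f="\<lambda>t. - G t", OF DERIV_minus[OF dG], of a]) (use that in auto)
    ultimately show ?thesis by simp
  qed
  obtain LS where LS: "(S \<longlongrightarrow> LS) at_top" using decr_conv[of a S 0, OF Sdec] pos by blast
  obtain LSI where LSI: "((\<lambda>t. S t + I t) \<longlongrightarrow> LSI) at_top"
  proof -
    have "0 \<le> S t + I t" if "a \<le> t" for t using pos[OF that] by auto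
    then show ?thesis using decr_conv[of a "\<lambda>t. S t + I t" 0, OF SIdec] that by blast
  qed
  obtain LD where LD: "((\<lambda>t. - D t) \<longlongrightarrow> LD) at_top"
  proof -
    have lb: "- G a \<le> - D t" if t: "a \<le> t" for t
    proof -
      have "G t = G a" by (rule Gc[OF t])
      moreover have "0 \<le> S t" "0 \<le> I t" "0 \<le> R t" using pos[OF t] by auto
      ultimately show ?thesis unfolding G_def by linarith
    qed
    obtain L where "((\<lambda>t. - D t) \<longlongrightarrow> L) at_top"
      using decr_conv[of a "\<lambda>t. - D t" "- G a", OF Ddec lb] by blast
    then show ?thesis by (rule that)
  qed
  have I: "(I \<longlongrightarrow> LSI - LS) at_top"
    by (rule tendsto_eventually_eq[OF tendsto_diff[OF LSI LS], of a]) simp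
  have D: "(D \<longlongrightarrow> - LD) at_top"
    using tendsto_minus[OF LD] by simp
  have R: "(R \<longlongrightarrow> G a - LSI + LD) at_top"
  proof (rule tendsto_eventually_eq[of "\<lambda>t. G a - (S t + I t) - D t", of _ a])
    show "((\<lambda>t. G a - (S t + I t) - D t) \<longlongrightarrow> G a - LSI + LD) at_top"
      using tendsto_diff[OF tendsto_diff[OF tendsto_const LSI] D] by simp
    fix t assume t: "a \<le> t"
    show "R t = G a - (S t + I t) - D t"
      using Gc[OF t] unfolding G_def by linarith
  qed
  show ?thesis using LS I R D by blast
qed

lemma deriv_ev:
  fixes f f' :: "real \<Rightarrow> real"
  assumes "\<And>t. a \<le> t \<Longrightarrow> (f has_real_derivative f' t) (at t)"
    and "(f' \<longlongrightarrow> 0) at_top"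
  shows "((\<lambda>t. deriv f t) \<longlongrightarrow> 0) at_top"
  by (rule tendsto_eventually_eq[OF assms(2), of a]) (simp add: DERIV_imp_deriv assms(1))

lemma army_d0:
  fixes S I R D A Se Re :: "real \<Rightarrow> real" and \<beta> \<gamma> \<gamma>t \<alpha> q a :: real
  assumes par: "\<beta> \<ge> 0" "\<gamma> \<ge> 0" "\<gamma>t \<ge> 0" "\<alpha> \<ge> 0" "q \<ge> 0"
    and pos: "\<And>t. a \<le> t \<Longrightarrow> A t \<ge> 0 \<and> Se t \<ge> 0 \<and> Re t \<ge> 0 \<and> S t \<ge> 0 \<and> I t \<ge> 0 \<and> R t \<ge> 0 \<and> D t \<ge> 0"
    and dS: "\<And>t. a \<le> t \<Longrightarrow> (S has_real_derivative rhsS \<beta> \<gamma> \<alpha> (A t) q (S t) (I t) (R t) (Se t) (Re t)) (at t)"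
    and dI: "\<And>t. a \<le> t \<Longrightarrow> (I has_real_derivative rhsI \<beta> \<gamma>t \<alpha> (A t) q (S t) (I t) (R t) (Se t) (Re t)) (at t)"
    and dR: "\<And>t. a \<le> t \<Longrightarrow> (R has_real_derivative rhsR \<gamma> \<gamma>t (A t) q (S t) (I t) (R t)) (at t)"
    and dD: "\<And>t. a \<le> t \<Longrightarrow> (D has_real_derivative rhsD (A t) q (S t) (I t) (R t)) (at t)"
    and uA: "ucb {a..} A" and uSe: "ucb {a..} Se" and uRe: "ucb {a..} Re"
  shows "ucb {a..} S \<and> ucb {a..} I \<and> ucb {a..} R \<and> ucb {a..} D \<and>
    ((\<lambda>t. deriv S t) \<longlongrightarrow> 0) at_top \<and> ((\<lambda>t. deriv I t) \<longlongrightarrow> 0) at_top \<and>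
    ((\<lambda>t. deriv R t) \<longlongrightarrow> 0) at_top \<and> ((\<lambda>t. deriv D t) \<longlongrightarrow> 0) at_top"
proof -
  have cv: "(\<exists>L. (S \<longlongrightarrow> L) at_top) \<and> (\<exists>L. (I \<longlongrightarrow> L) at_top) \<and> (\<exists>L. (R \<longlongrightarrow> L) at_top) \<and> (\<exists>L. (D \<longlongrightarrow> L) at_top)"
    by (rule army_conv[OF par(1) par(2) par(3) par(4) pos dS dI dR dD])
  have cont: "continuous_on {a..} f" if "\<And>t. a \<le> t \<Longrightarrow> (f has_real_derivative f' t) (at t)" for f f'
  proof (rule DERIV_continuous_on[of "{a..}" f "\<lambda>t. f' t"])
    fix x assume "x \<in> {a..}"
    then have ax: "a \<le> x" by simp
    show "(f has_field_derivative f' x) (at x within {a..})"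
      by (rule has_field_derivative_at_within[OF that[OF ax]])
  qed
  have ucbI: "ucb {a..} f" if "\<And>t. a \<le> t \<Longrightarrow> (f has_real_derivative f' t) (at t)" "(f \<longlongrightarrow> L) at_top" for f f' L
    using conv_cont_ucb[OF cont[OF that(1)] that(2)] unfolding ucb_def by auto
  obtain LS LI LR LD where L: "(S \<longlongrightarrow> LS) at_top" "(I \<longlongrightarrow> LI) at_top" "(R \<longlongrightarrow> LR) at_top" "(D \<longlongrightarrow> LD) at_top"
    using cv by blast
  have uS: "ucb {a..} S" by (rule ucbI[OF dS L(1)])
  have uI: "ucb {a..} I" by (rule ucbI[OF dI L(2)])
  have uR: "ucb {a..} R" by (rule ucbI[OF dR L(3)])
  have uD: "ucb {a..} D" by (rule ucbI[OF dD L(4)])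
  have p: "\<And>t. t \<in> {a..} \<Longrightarrow> S t \<ge> 0" "\<And>t. t \<in> {a..} \<Longrightarrow> I t \<ge> 0" "\<And>t. t \<in> {a..} \<Longrightarrow> R t \<ge> 0"
    using pos by auto
  have p2: "\<And>t. t \<in> {a..} \<Longrightarrow> S t + R t \<ge> 0" using pos by (auto intro: add_nonneg_nonneg)
  have fS: "ucb {a..} (\<lambda>t. fpow q (S t))" by (rule ucb_fpow[OF uS p(1) par(5)])
  have fI: "ucb {a..} (\<lambda>t. fpow q (I t))" by (rule ucb_fpow[OF uI p(2) par(5)])
  have fR: "ucb {a..} (\<lambda>t. fpow q (R t))" by (rule ucb_fpow[OF uR p(3) par(5)])
  have s1: "ucb {a..} (\<lambda>t. sdiv (S t * I t) (S t + I t + R t))" by (rule ucb_sdiv[OF uS uI uR p])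
  have s2': "ucb {a..} (\<lambda>t. sdiv (I t * (S t + R t)) (I t + (S t + R t) + 0))"
    by (rule ucb_sdiv[OF uI ucb_add[OF uS uR] ucb_const p(2) p2]) auto
  have s2: "ucb {a..} (\<lambda>t. sdiv (I t * (S t + R t)) (S t + I t + R t))"
    using s2' by (simp add: add_ac)
  note U = ucb_add ucb_diff ucb_mult ucb_minus ucb_const
  have uSd: "ucb {a..} (\<lambda>t. rhsS \<beta> \<gamma> \<alpha> (A t) q (S t) (I t) (R t) (Se t) (Re t))"
    unfolding rhsS_def by (intro U s1 fS uS uA uSe uRe)
  have uId: "ucb {a..} (\<lambda>t. rhsI \<beta> \<gamma>t \<alpha> (A t) q (S t) (I t) (R t) (Se t) (Re t))"
    unfolding rhsI_def by (intro U s1 s2 fI uS uA uSe uRe)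
  have uRd: "ucb {a..} (\<lambda>t. rhsR \<gamma> \<gamma>t (A t) q (S t) (I t) (R t))"
    unfolding rhsR_def by (intro U s2 fR uS uA)
  have uDd: "ucb {a..} (\<lambda>t. rhsD (A t) q (S t) (I t) (R t))"
    unfolding rhsD_def by (intro U fS fI fR uA)
  have "((\<lambda>t. deriv S t) \<longlongrightarrow> 0) at_top"
    by (rule deriv_ev[OF dS]) (use barbalat[OF dS L(1)] uSd[unfolded ucb_def] in auto)
  moreover have "((\<lambda>t. deriv I t) \<longlongrightarrow> 0) at_top"
    by (rule deriv_ev[OF dI]) (use barbalat[OF dI L(2)] uId[unfolded ucb_def] in auto)
  moreover have "((\<lambda>t. deriv R t) \<longlongrightarrow> 0) at_top"
    by (rule deriv_ev[OF dR]) (use barbalat[OF dR L(3)] uRd[unfolded ucb_def] in auto)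
  moreover have "((\<lambda>t. deriv D t) \<longlongrightarrow> 0) at_top"
    by (rule deriv_ev[OF dD]) (use barbalat[OF dD L(4)] uDd[unfolded ucb_def] in auto)
  ultimately show ?thesis using uS uI uR uD by blast
qed

lemma within_to_at:
  fixes f :: "real \<Rightarrow> real"
  assumes "0 < t" "(f has_real_derivative D) (at t within {0..})"
  shows "(f has_real_derivative D) (at t)"
proof -
  have "(f has_real_derivative D) (at t within {0<..})"
    using assms(2) by (rule DERIV_subset) auto
  then show ?thesis using assms(1) at_within_open[of t "{0<..}"] by simp
qed

lemma attack_nonneg: "\<delta> \<ge> 0 \<Longrightarrow> \<eta> \<ge> 0 \<Longrightarrow> attack \<delta> \<eta> p S I R \<ge> 0"
  unfolding attack_def by (simp add: fpow_nonneg)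

lemma ucb_attack:
  assumes "ucb S x" "ucb S y" "ucb S z" "\<And>t. t \<in> S \<Longrightarrow> x t \<ge> 0" "\<And>t. t \<in> S \<Longrightarrow> y t \<ge> 0"
    "\<And>t. t \<in> S \<Longrightarrow> z t \<ge> 0" "p \<ge> 0"
  shows "ucb S (\<lambda>t. attack \<delta> \<eta> p (x t) (y t) (z t))"
proof -
  have "ucb S (\<lambda>t. fpow p (x t))" "ucb S (\<lambda>t. fpow p (y t))" "ucb S (\<lambda>t. fpow p (z t))"
    using assms by (auto intro!: ucb_fpow)
  then show ?thesis unfolding attack_def by (intro ucb_mult ucb_add ucb_const)
qed

theorem proposition3:
  fixes Sb Ib Rb Db Sr Ir Rr Dr :: "real \<Rightarrow> real"
    and \<alpha>b \<alpha>r \<gamma>b \<gamma>r \<gamma>tb \<gamma>tr \<delta>b \<delta>r :: "real \<Rightarrow> real"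
    and \<beta>b \<beta>r \<eta>b \<eta>r p q T0 :: real
    and E :: "real set"
  assumes params_const: "\<beta>b \<ge> 0" "\<beta>r \<ge> 0" "\<eta>b \<in> {0..1}" "\<eta>r \<in> {0..1}" "p \<ge> 0" "q \<ge> 0"
    and params_var: "\<And>t. t \<ge> 0 \<Longrightarrow> \<alpha>b t \<ge> 0 \<and> \<alpha>r t \<ge> 0 \<and> \<gamma>b t \<in> {0..1} \<and> \<gamma>r t \<in> {0..1}
                        \<and> \<gamma>tb t \<ge> 0 \<and> \<gamma>tr t \<ge> 0 \<and> \<delta>b t \<ge> 0 \<and> \<delta>r t \<ge> 0"
    and piecewise: "\<forall>g\<in>{\<alpha>b, \<alpha>r, \<gamma>b, \<gamma>r, \<gamma>tb, \<gamma>tr, \<delta>b, \<delta>r}. piecewise_const E g"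
    and events_before: "\<forall>e\<in>E. e \<le> T0"
    and const_after: "\<forall>g\<in>{\<alpha>b, \<alpha>r, \<gamma>b, \<gamma>r, \<gamma>tb, \<gamma>tr, \<delta>b, \<delta>r}. \<forall>t\<ge>T0. g t = g T0"
    and cont: "\<forall>C\<in>{Sb, Ib, Rb, Db, Sr, Ir, Rr, Dr}. continuous_on {0..} C"
    and nonneg: "\<And>t. t \<ge> 0 \<Longrightarrow> Sb t \<ge> 0 \<and> Ib t \<ge> 0 \<and> Rb t \<ge> 0 \<and> Db t \<ge> 0
                      \<and> Sr t \<ge> 0 \<and> Ir t \<ge> 0 \<and> Rr t \<ge> 0 \<and> Dr t \<ge> 0"
    and ode: "\<And>t. t \<ge> 0 \<Longrightarrow> t \<notin> E \<Longrightarrow>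
      (let Ab = attack (\<delta>b t) \<eta>b p (Sb t) (Ib t) (Rb t);
           Ar = attack (\<delta>r t) \<eta>r p (Sr t) (Ir t) (Rr t) in
       (Sb has_real_derivative rhsS \<beta>b (\<gamma>b t) (\<alpha>r t) Ar q (Sb t) (Ib t) (Rb t) (Sr t) (Rr t)) (at t within {0..})
     \<and> (Ib has_real_derivative rhsI \<beta>b (\<gamma>tb t) (\<alpha>r t) Ar q (Sb t) (Ib t) (Rb t) (Sr t) (Rr t)) (at t within {0..})
     \<and> (Rb has_real_derivative rhsR (\<gamma>b t) (\<gamma>tb t) Ar q (Sb t) (Ib t) (Rb t)) (at t within {0..})
     \<and> (Db has_real_derivative rhsD Ar q (Sb t) (Ib t) (Rb t)) (at t within {0..})
     \<and> (Sr has_real_derivative rhsS \<beta>r (\<gamma>r t) (\<alpha>b t) Ab q (Sr t) (Ir t) (Rr t) (Sb t) (Rb t)) (at t within {0..})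
     \<and> (Ir has_real_derivative rhsI \<beta>r (\<gamma>tr t) (\<alpha>b t) Ab q (Sr t) (Ir t) (Rr t) (Sb t) (Rb t)) (at t within {0..})
     \<and> (Rr has_real_derivative rhsR (\<gamma>r t) (\<gamma>tr t) Ab q (Sr t) (Ir t) (Rr t)) (at t within {0..})
     \<and> (Dr has_real_derivative rhsD Ab q (Sr t) (Ir t) (Rr t)) (at t within {0..}))"
  shows "\<forall>C\<in>{Sb, Ib, Rb, Db, Sr, Ir, Rr, Dr}. ((\<lambda>t. deriv C t) \<longlongrightarrow> 0) at_top"
proof -
  define a where "a = max T0 0 + 1"
  have a0: "a > 0" "a \<ge> 0" "a > T0" unfolding a_def by auto
  have eqs: "\<alpha>b t = \<alpha>b a \<and> \<alpha>r t = \<alpha>r a \<and> \<gamma>b t = \<gamma>b a \<and> \<gamma>r t = \<gamma>r a \<and> \<gamma>tb t = \<gamma>tb a \<and> \<gamma>tr t = \<gamma>tr a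
      \<and> \<delta>b t = \<delta>b a \<and> \<delta>r t = \<delta>r a" if "a \<le> t" for t
  proof -
    have Tt: "T0 \<le> t" "T0 \<le> a" using that a0 by auto
    have h: "g t = g a" if g: "g \<in> {\<alpha>b, \<alpha>r, \<gamma>b, \<gamma>r, \<gamma>tb, \<gamma>tr, \<delta>b, \<delta>r}" for g
    proof -
      have "\<forall>t\<ge>T0. g t = g T0" using const_after g by blast
      then have "g t = g T0" "g a = g T0" using Tt by blast+
      then show ?thesis by simp
    qed
    show ?thesis
      using h[of \<alpha>b] h[of \<alpha>r] h[of \<gamma>b] h[of \<gamma>r] h[of \<gamma>tb] h[of \<gamma>tr] h[of \<delta>b] h[of \<delta>r]
      by (simp only: insert_iff simp_thms)
  qed
  have pv: "\<alpha>b a \<ge> 0" "\<alpha>r a \<ge> 0" "\<gamma>b a \<ge> 0" "\<gamma>r a \<ge> 0" "\<gamma>tb a \<ge> 0" "\<gamma>tr a \<ge> 0" "\<delta>b a \<ge> 0" "\<delta>r a \<ge> 0"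
    using params_var[OF a0(2)] by auto
  have eta: "\<eta>b \<ge> 0" "\<eta>r \<ge> 0" using params_const by auto
  define Ab where "Ab t = attack (\<delta>b a) \<eta>b p (Sb t) (Ib t) (Rb t)" for t
  define Ar where "Ar t = attack (\<delta>r a) \<eta>r p (Sr t) (Ir t) (Rr t)" for t
  have der: "(Sb has_real_derivative rhsS \<beta>b (\<gamma>b a) (\<alpha>r a) (Ar t) q (Sb t) (Ib t) (Rb t) (Sr t) (Rr t)) (at t)
     \<and> (Ib has_real_derivative rhsI \<beta>b (\<gamma>tb a) (\<alpha>r a) (Ar t) q (Sb t) (Ib t) (Rb t) (Sr t) (Rr t)) (at t)
     \<and> (Rb has_real_derivative rhsR (\<gamma>b a) (\<gamma>tb a) (Ar t) q (Sb t) (Ib t) (Rb t)) (at t)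
     \<and> (Db has_real_derivative rhsD (Ar t) q (Sb t) (Ib t) (Rb t)) (at t)
     \<and> (Sr has_real_derivative rhsS \<beta>r (\<gamma>r a) (\<alpha>b a) (Ab t) q (Sr t) (Ir t) (Rr t) (Sb t) (Rb t)) (at t)
     \<and> (Ir has_real_derivative rhsI \<beta>r (\<gamma>tr a) (\<alpha>b a) (Ab t) q (Sr t) (Ir t) (Rr t) (Sb t) (Rb t)) (at t)
     \<and> (Rr has_real_derivative rhsR (\<gamma>r a) (\<gamma>tr a) (Ab t) q (Sr t) (Ir t) (Rr t)) (at t)
     \<and> (Dr has_real_derivative rhsD (Ab t) q (Sr t) (Ir t) (Rr t)) (at t)" if t: "a \<le> t" for t
  proof -
    have tpos: "0 < t" "0 \<le> t" using t a0 by auto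
    have tE: "t \<notin> E" using events_before t a0 by force
    have o: "(Sb has_real_derivative rhsS \<beta>b (\<gamma>b a) (\<alpha>r a) (Ar t) q (Sb t) (Ib t) (Rb t) (Sr t) (Rr t)) (at t within {0..})
     \<and> (Ib has_real_derivative rhsI \<beta>b (\<gamma>tb a) (\<alpha>r a) (Ar t) q (Sb t) (Ib t) (Rb t) (Sr t) (Rr t)) (at t within {0..})
     \<and> (Rb has_real_derivative rhsR (\<gamma>b a) (\<gamma>tb a) (Ar t) q (Sb t) (Ib t) (Rb t)) (at t within {0..})
     \<and> (Db has_real_derivative rhsD (Ar t) q (Sb t) (Ib t) (Rb t)) (at t within {0..})
     \<and> (Sr has_real_derivative rhsS \<beta>r (\<gamma>r a) (\<alpha>b a) (Ab t) q (Sr t) (Ir t) (Rr t) (Sb t) (Rb t)) (at t within {0..})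
     \<and> (Ir has_real_derivative rhsI \<beta>r (\<gamma>tr a) (\<alpha>b a) (Ab t) q (Sr t) (Ir t) (Rr t) (Sb t) (Rb t)) (at t within {0..})
     \<and> (Rr has_real_derivative rhsR (\<gamma>r a) (\<gamma>tr a) (Ab t) q (Sr t) (Ir t) (Rr t)) (at t within {0..})
     \<and> (Dr has_real_derivative rhsD (Ab t) q (Sr t) (Ir t) (Rr t)) (at t within {0..})"
      using ode[OF tpos(2) tE] eqs[OF t] unfolding Let_def Ab_def Ar_def by simp
    then show ?thesis using within_to_at[OF tpos(1)] by blast
  qed
  have pos: "a \<le> t \<Longrightarrow> Sb t \<ge> 0 \<and> Ib t \<ge> 0 \<and> Rb t \<ge> 0 \<and> Db t \<ge> 0
                      \<and> Sr t \<ge> 0 \<and> Ir t \<ge> 0 \<and> Rr t \<ge> 0 \<and> Dr t \<ge> 0 \<and> Ab t \<ge> 0 \<and> Ar t \<ge> 0" for t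
    using nonneg[of t] a0 pv eta unfolding Ab_def Ar_def by (auto intro!: attack_nonneg)
  have cb: "(\<exists>L. (Sb \<longlongrightarrow> L) at_top) \<and> (\<exists>L. (Ib \<longlongrightarrow> L) at_top) \<and> (\<exists>L. (Rb \<longlongrightarrow> L) at_top) \<and> (\<exists>L. (Db \<longlongrightarrow> L) at_top)"
    by (rule army_conv[of \<beta>b "\<gamma>b a" "\<gamma>tb a" "\<alpha>r a" a Ar Sr Rr Sb Ib Rb Db q])
      (use params_const pv pos der in auto)
  have cr: "(\<exists>L. (Sr \<longlongrightarrow> L) at_top) \<and> (\<exists>L. (Ir \<longlongrightarrow> L) at_top) \<and> (\<exists>L. (Rr \<longlongrightarrow> L) at_top) \<and> (\<exists>L. (Dr \<longlongrightarrow> L) at_top)"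
    by (rule army_conv[of \<beta>r "\<gamma>r a" "\<gamma>tr a" "\<alpha>b a" a Ab Sb Rb Sr Ir Rr Dr q])
      (use params_const pv pos der in auto)
  have uc: "ucb {a..} C" if "C \<in> {Sb, Ib, Rb, Sr, Ir, Rr}" for C
  proof -
    have c: "continuous_on {a..} C"
      using cont that a0 by (auto intro: continuous_on_subset)
    from that have "C = Sb \<or> C = Ib \<or> C = Rb \<or> C = Sr \<or> C = Ir \<or> C = Rr" by simp
    then have "\<exists>L. (C \<longlongrightarrow> L) at_top" using cb cr by (elim disjE) simp_all
    then obtain L where "(C \<longlongrightarrow> L) at_top" by blast
    then have "uniformly_continuous_on {a..} C \<and> (\<exists>M. \<forall>t\<ge>a. \<bar>C t\<bar> \<le> M)"
      by (rule conv_cont_ucb[OF c])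
    then show ?thesis unfolding ucb_def by auto
  qed
  have nn: "\<And>t. t \<in> {a..} \<Longrightarrow> C t \<ge> 0" if "C \<in> {Sb, Ib, Rb, Sr, Ir, Rr}" for C
    using that pos by auto
  have uAb: "ucb {a..} Ab" unfolding Ab_def
    by (rule ucb_attack[OF uc uc uc nn nn nn params_const(5)]) auto
  have uAr: "ucb {a..} Ar" unfolding Ar_def
    by (rule ucb_attack[OF uc uc uc nn nn nn params_const(5)]) auto
  have db: "ucb {a..} Sb \<and> ucb {a..} Ib \<and> ucb {a..} Rb \<and> ucb {a..} Db \<and>
    ((\<lambda>t. deriv Sb t) \<longlongrightarrow> 0) at_top \<and> ((\<lambda>t. deriv Ib t) \<longlongrightarrow> 0) at_top \<and>
    ((\<lambda>t. deriv Rb t) \<longlongrightarrow> 0) at_top \<and> ((\<lambda>t. deriv Db t) \<longlongrightarrow> 0) at_top"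
    by (rule army_d0[of \<beta>b "\<gamma>b a" "\<gamma>tb a" "\<alpha>r a" q a Ar Sr Rr Sb Ib Rb Db])
      (use params_const pv pos der uAr uc in auto)
  have dr: "ucb {a..} Sr \<and> ucb {a..} Ir \<and> ucb {a..} Rr \<and> ucb {a..} Dr \<and>
    ((\<lambda>t. deriv Sr t) \<longlongrightarrow> 0) at_top \<and> ((\<lambda>t. deriv Ir t) \<longlongrightarrow> 0) at_top \<and>
    ((\<lambda>t. deriv Rr t) \<longlongrightarrow> 0) at_top \<and> ((\<lambda>t. deriv Dr t) \<longlongrightarrow> 0) at_top"
    by (rule army_d0[of \<beta>r "\<gamma>r a" "\<gamma>tr a" "\<alpha>b a" q a Ab Sb Rb Sr Ir Rr Dr])
      (use params_const pv pos der uAb uc in auto)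
  show ?thesis using db dr by auto
qed

end
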